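(* Let $q$ be a power of $2$. In $\mathrm{AG}(3,q^2)$ with affine coordinates $x,y,z$ and plane at infinity $\Sigma_\infty$, let $\mathcal H$ be the Hermitian surface $z^q+z=x^{q+1}+y^{q+1}$ and let $\mathcal Q$ be a hyperbolic quadric with affine equation $z=ax^2+by^2+cxy+dx+ey+f$, $a,\dots,f\in\mathrm{GF}(q^2)$, such that $\mathcal C_\infty=\mathcal Q\cap\mathcal H\cap\Sigma_\infty$ is the union of two lines. Let $\Xi_\infty$ be the quadric of $\mathrm{PG}(3,q)$ defined below. If $\Xi_\infty$ has rank $2$, then $\Xi_\infty$ is the union of two planes $\Pi_1\cup\Pi_2$ both defined over $\mathrm{GF}(q)$.
   Context: Fix $\nu\in\mathrm{GF}(q)\setminus\{1\}$ with absolute trace $\mathrm{Tr}_q(\nu)=\nu+\nu^2+\dots+\nu^{q/2}=1$, and $\varepsilon\in\mathrm{GF}(q^2)\setminus\mathrm{GF}(q)$ with $\varepsilon^2+\varepsilon+\nu=0$. Write each $t\in\mathrm{GF}(q^2)$ as $t=t_0+t_1\varepsilon$ with $t_0,t_1\in\mathrm{GF}(q)$ (so $a=a_0+a_1\varepsilon$, $b=b_0+b_1\varepsilon$, $c=c_0+c_1\varepsilon$, etc.). $\Xi_\infty$ is the quadric of $\mathrm{PG}(3,q)$ in coordinates $(x_0,x_1,y_0,y_1)$ with equation $(a_1+1)x_0^2+x_0x_1+[a_0+(1+\nu)a_1+\nu]x_1^2+(b_1+1)y_0^2+y_0y_1+[b_0+(1+\nu)b_1+\nu]y_1^2+c_1x_0y_0+(c_0+c_1)x_0y_1+(c_0+c_1)x_1y_0+[c_0+(1+\nu)c_1]x_1y_1=0.$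 The rank of a quadric is the minimum number of indeterminates appearing in an equation for it under projective changes of coordinates. *)

theory Defs
  imports Main
begin

text \<open>Points of PG(3,F) are represented by nonzero homogeneous coordinate vectors
  in F^4, written as 4-tuples.\<close>

type_synonym 'a vec4 = "'a \<times> 'a \<times> 'a \<times> 'a"

definition vadd :: "'a::field vec4 \<Rightarrow> 'a vec4 \<Rightarrow> 'a vec4" where
  "vadd u v = (case u of (u1,u2,u3,u4) \<Rightarrow> case v of (v1,v2,v3,v4) \<Rightarrow>
      (u1+v1, u2+v2, u3+v3, u4+v4))"

definition vsmult :: "'a::field \<Rightarrow> 'a vec4 \<Rightarrow> 'a vec4" where
  "vsmult c u = (case u of (u1,u2,u3,u4) \<Rightarrow> (c*u1, c*u2, c*u3, c*u4))"

definition vindep :: "'a::field vec4 \<Rightarrow> 'a vec4 \<Rightarrow> bool" where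
  "vindep u w \<longleftrightarrow> (\<forall>r s. vadd (vsmult r u) (vsmult s w) = (0,0,0,0) \<longrightarrow> r = 0 \<and> s = 0)"

text \<open>The 2-dimensional subspace spanned by u, w (a line of PG(3,F) when u, w are independent).\<close>
definition vspan2 :: "'a::field vec4 \<Rightarrow> 'a vec4 \<Rightarrow> 'a vec4 set" where
  "vspan2 u w = {vadd (vsmult r u) (vsmult s w) | r s. True}"

definition union_two_lines :: "'a::field vec4 set \<Rightarrow> bool" where
  "union_two_lines S \<longleftrightarrow> (\<exists>u1 w1 u2 w2. vindep u1 w1 \<and> vindep u2 w2 \<and>
       vspan2 u1 w1 \<noteq> vspan2 u2 w2 \<and>
       S = (vspan2 u1 w1 \<union> vspan2 u2 w2) - {(0,0,0,0)})"

definition polar :: "('a::field vec4 \<Rightarrow> 'a) \<Rightarrow> 'a vec4 \<Rightarrow> 'a vec4 \<Rightarrow> 'a" where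
  "polar Q u v = Q (vadd u v) - Q u - Q v"

definition nonsingular_quadric :: "('a::field vec4 \<Rightarrow> 'a) \<Rightarrow> bool" where
  "nonsingular_quadric Q \<longleftrightarrow>
     \<not> (\<exists>v. v \<noteq> (0,0,0,0) \<and> Q v = 0 \<and> (\<forall>w. polar Q v w = 0))"

definition hyperbolic_quadric :: "('a::field vec4 \<Rightarrow> 'a) \<Rightarrow> bool" where
  "hyperbolic_quadric Q \<longleftrightarrow> nonsingular_quadric Q \<and>
     (\<exists>u w. vindep u w \<and> (\<forall>v\<in>vspan2 u w. Q v = 0))"

text \<open>Quadratic forms in 4 indeterminates X_0..X_3 given by their coefficients:
  C i j (for i \<le> j < 4) is the coefficient of X_i X_j.\<close>
type_synonym 'a qcoeffs = "nat \<Rightarrow> nat \<Rightarrow> 'a"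

text \<open>Coefficients of the form obtained by the linear substitution X_i = sum_k M i k * Y_k.\<close>
definition qsubst :: "'a::comm_ring_1 qcoeffs \<Rightarrow> (nat \<Rightarrow> nat \<Rightarrow> 'a) \<Rightarrow> 'a qcoeffs" where
  "qsubst C M k l =
     (if k = l then (\<Sum>i<4. \<Sum>j\<in>{i..<4}. C i j * M i k * M j k)
      else (\<Sum>i<4. \<Sum>j\<in>{i..<4}. C i j * (M i k * M j l + M i l * M j k)))"

definition var_appears :: "'a::zero qcoeffs \<Rightarrow> nat \<Rightarrow> bool" where
  "var_appears C k \<longleftrightarrow> (\<exists>l<4. C (min k l) (max k l) \<noteq> 0)"

definition invertible_over :: "'a::field set \<Rightarrow> (nat \<Rightarrow> nat \<Rightarrow> 'a) \<Rightarrow> bool" where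
  "invertible_over K M \<longleftrightarrow> (\<forall>i<4. \<forall>j<4. M i j \<in> K) \<and>
     (\<exists>N. (\<forall>i<4. \<forall>j<4. N i j \<in> K) \<and>
          (\<forall>i<4. \<forall>j<4. (\<Sum>k<4. M i k * N k j) = (if i = j then 1 else 0)))"

text \<open>Rank of a quadric of PG(3,K): minimum number of indeterminates appearing in an
  equation for it under projective changes of coordinates (over K).\<close>
definition qrank :: "'a::field set \<Rightarrow> 'a qcoeffs \<Rightarrow> nat" where
  "qrank K C = (LEAST n. \<exists>M. invertible_over K M \<and>
                    card {k. k < 4 \<and> var_appears (qsubst C M) k} = n)"

text \<open>The quadric is the union of two planes defined over K: its quadratic form is the
  product of two linear forms with coefficients in K.\<close>
definition two_planes_over :: "'a::field set \<Rightarrow> 'a qcoeffs \<Rightarrow> bool" where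
  "two_planes_over K C \<longleftrightarrow> (\<exists>l m. (\<forall>i<4. l i \<in> K \<and> m i \<in> K) \<and>
     (\<forall>i<4. \<forall>j<4. i \<le> j \<longrightarrow>
        C i j = (if i = j then l i * m i else l i * m j + l j * m i)))"

definition subGF :: "nat \<Rightarrow> 'a::field set" where
  "subGF q = {u. u ^ q = u}"

text \<open>The quadric Xi_infinity, coordinates (x0,x1,y0,y1) = indices 0,1,2,3.\<close>
definition Xi_inf :: "'a::field \<Rightarrow> 'a \<Rightarrow> 'a \<Rightarrow> 'a \<Rightarrow> 'a \<Rightarrow> 'a \<Rightarrow> 'a \<Rightarrow> 'a qcoeffs" where
  "Xi_inf \<nu> a0 a1 b0 b1 c0 c1 i j =
    (if (i,j) = (0,0) then a1 + 1
     else if (i,j) = (0,1) then 1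
     else if (i,j) = (1,1) then a0 + (1+\<nu>)*a1 + \<nu>
     else if (i,j) = (2,2) then b1 + 1
     else if (i,j) = (2,3) then 1
     else if (i,j) = (3,3) then b0 + (1+\<nu>)*b1 + \<nu>
     else if (i,j) = (0,2) then c1
     else if (i,j) = (0,3) then c0 + c1
     else if (i,j) = (1,2) then c0 + c1
     else if (i,j) = (1,3) then c0 + (1+\<nu>)*c1
     else 0)"

end

theory Submission
  imports Defs
begin


lemma char2_of_card:
  fixes h :: nat
  assumes card: "card (UNIV :: 'b::{field,finite} set) = (2^h)^2" and h: "h \<ge> 1"
  shows "(2::'b) = 0"
proof -
  have "(\<Sum>y\<in>(UNIV::'b set). y + 1) = (\<Sum>y\<in>UNIV. y)"
    by (rule sum.reindex_bij_witness[of _ "\<lambda>y. y - 1" "\<lambda>y. y + 1"]) auto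
  hence "of_nat (card (UNIV::'b set)) = (0::'b)"
    by (simp add: sum.distrib)
  hence "(2::'b) ^ (2*h) = 0" using card by (simp add: power_mult[symmetric] mult.commute)
  thus ?thesis by simp
qed

lemma neg_char2: "(2::'a::comm_ring_1) = 0 \<Longrightarrow> - x = (x::'a)"
  by (metis add_eq_0_iff2 mult_2 mult_zero_left)

lemma minus_char2: "(2::'a::comm_ring_1) = 0 \<Longrightarrow> x - y = x + (y::'a)"
  by (metis diff_conv_add_uminus neg_char2)

lemma frob2: "(2::'a::comm_ring_1) = 0 \<Longrightarrow> (x + y)^2 = x^2 + (y::'a)^2"
  by (simp add: power2_eq_square algebra_simps)

lemma frob: "(2::'a::comm_ring_1) = 0 \<Longrightarrow> (x + y)^(2^k) = x^(2^k) + (y::'a)^(2^k)"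
proof (induction k)
  case 0 then show ?case by simp
next
  case (Suc k)
  have "(x+y)^(2^Suc k) = ((x+y)^(2^k))^2" by (simp add: power_mult[symmetric] mult.commute)
  also have "\<dots> = (x^(2^k))^2 + (y^(2^k))^2" using Suc by (simp add: frob2)
  also have "\<dots> = x^(2^Suc k) + y^(2^Suc k)" by (simp add: power_mult[symmetric] mult.commute)
  finally show ?case .
qed

lemma fermat_field:
  fixes x :: "'a :: {field,finite}"
  shows "x ^ card (UNIV :: 'a set) = x"
proof (cases "x = 0")
  case False
  have "x * (\<Prod>y\<in>UNIV-{0}. x * y) = x * x ^ (card (UNIV :: 'a set) - 1) * \<Prod>(UNIV-{0})"
    by (simp add: prod.distrib mult_ac)
  also have "x * x ^ (card (UNIV :: 'a set) - 1) = x ^ Suc (card (UNIV :: 'a set) - 1)"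
    by (subst power_Suc) auto
  also have "Suc (card (UNIV :: 'a set) - 1) = card (UNIV :: 'a set)"
    using finite_UNIV_card_ge_0[where ?'a = 'a] by simp
  also have "(\<Prod>y\<in>UNIV-{0}. x * y) = (\<Prod>y\<in>UNIV-{0}. y)"
    by (rule prod.reindex_bij_witness[of _ "\<lambda>y. y / x" "\<lambda>y. x * y"]) (use False in auto)
  finally show ?thesis
    by simp
qed (use finite_UNIV_card_ge_0[where ?'a = 'a] in auto)

definition qeval :: "'a::comm_ring_1 qcoeffs \<Rightarrow> (nat \<Rightarrow> 'a) \<Rightarrow> 'a" where
  "qeval C v = (\<Sum>i<4. \<Sum>j\<in>{i..<4}. C i j * v i * v j)"

lemma qeval_expand: "qeval C v =
   C 0 0 * v 0 * v 0 + C 0 1 * v 0 * v 1 + C 0 2 * v 0 * v 2 + C 0 3 * v 0 * v 3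
 + C 1 1 * v 1 * v 1 + C 1 2 * v 1 * v 2 + C 1 3 * v 1 * v 3
 + C 2 2 * v 2 * v 2 + C 2 3 * v 2 * v 3 + C 3 3 * v 3 * v 3"
  by (simp add: qeval_def numeral_eq_Suc lessThan_Suc atLeastLessThanSuc algebra_simps)

lemma qsubst_eval: "qeval C (\<lambda>i. \<Sum>k<4. M i k * y k) = qeval (qsubst C M) y"
  unfolding qeval_expand qsubst_def
  by (simp add: numeral_eq_Suc lessThan_Suc atLeastLessThanSuc algebra_simps)


locale gfset =
  fixes q h :: nat and \<nu> \<epsilon> :: "'b::{field,finite}"
  assumes q_def: "q = 2 ^ h" and h_pos: "h \<ge> 1"
    and card: "card (UNIV :: 'b set) = q ^ 2"
    and nu_GF: "\<nu> \<in> subGF q"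
    and eps_notin: "\<epsilon> \<notin> subGF q" and eps_eq: "\<epsilon>\<^sup>2 + \<epsilon> + \<nu> = 0"
begin

abbreviation "K \<equiv> (subGF q :: 'b set)"

lemma two[simp]: "(2::'b) = 0"
  using char2_of_card[of h] card q_def h_pos by auto
lemma two_mult[simp]: "(x::'b) * 2 = 0" "2 * (x::'b) = 0" by simp_all

lemma neg: "- (x::'b) = x" using neg_char2[OF two] .
lemma minus: "(x::'b) - y = x + y" using minus_char2[OF two] .
lemma addself[simp]: "(x::'b) + x = 0" by (metis mult_2 two mult_zero_left)

lemma fr: "((x::'b) + y)^q = x^q + y^q"
  using frob[OF two] q_def by simp

lemma q_pos: "q > 0" using q_def by simp
lemma zq[simp]: "(0::'b)^q = 0" using q_pos by (simp add: power_0_left)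

lemma pow_qq: "((x::'b)^q)^q = x"
  using fermat_field[of x] card by (simp add: power_mult[symmetric] power2_eq_square)

lemma K_iff: "x \<in> K \<longleftrightarrow> x^q = x" by (simp add: subGF_def)

lemma K0[simp]: "0 \<in> K" by (simp add: K_iff)
lemma K1[simp]: "1 \<in> K" by (simp add: K_iff)
lemma Kadd[simp]: "x \<in> K \<Longrightarrow> y \<in> K \<Longrightarrow> x + y \<in> K" by (simp add: K_iff fr)
lemma Kmult[simp]: "x \<in> K \<Longrightarrow> y \<in> K \<Longrightarrow> x * y \<in> K" by (simp add: K_iff power_mult_distrib)
lemma Kdiv[simp]: "x \<in> K \<Longrightarrow> y \<in> K \<Longrightarrow> x / y \<in> K" by (simp add: K_iff power_divide)
lemma Ksum: "(\<And>i. i \<in> A \<Longrightarrow> f i \<in> K) \<Longrightarrow> sum f A \<in> K"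
proof (induction A rule: infinite_finite_induct)
qed auto

lemma eps_q: "\<epsilon>^q = \<epsilon> + 1"
proof -
  have nq: "\<nu>^q = \<nu>" using nu_GF by (simp add: K_iff)
  have "(\<epsilon>^q)^2 + \<epsilon>^q + \<nu> = (\<epsilon>\<^sup>2 + \<epsilon> + \<nu>)^q"
    by (simp add: fr nq power_mult[symmetric] mult.commute)
  also have "\<dots> = 0" using eps_eq by simp
  finally have z: "(\<epsilon>^q)^2 + \<epsilon>^q + \<nu> = 0" .
  have "(\<epsilon>^q + \<epsilon>) * (\<epsilon>^q + \<epsilon> + 1) = ((\<epsilon>^q)^2 + \<epsilon>^q + \<nu>) + (\<epsilon>\<^sup>2 + \<epsilon> + \<nu>) + 2 * (\<epsilon>^q * \<epsilon>) - 2 * \<nu>"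
    by algebra
  also have "\<dots> = 0" using z eps_eq by simp
  finally have "\<epsilon>^q + \<epsilon> = 0 \<or> \<epsilon>^q + \<epsilon> + 1 = 0" by simp
  moreover have "\<epsilon>^q \<noteq> \<epsilon>" using eps_notin by (simp add: K_iff)
  moreover have "\<epsilon>^q + \<epsilon> = 0 \<Longrightarrow> \<epsilon>^q = \<epsilon>" by (metis add_eq_0_iff neg)
  moreover have "\<epsilon>^q + \<epsilon> + 1 = 0 \<Longrightarrow> \<epsilon>^q = \<epsilon> + 1" by (metis add_eq_0_iff neg add.assoc)
  ultimately show ?thesis by blast
qed

definition cp1 :: "'b \<Rightarrow> 'b" where "cp1 t = t + t^q"
definition cp0 :: "'b \<Rightarrow> 'b" where "cp0 t = t + (t + t^q) * \<epsilon>"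

lemma cp1K: "cp1 t \<in> K" by (simp add: K_iff cp1_def fr pow_qq add.commute)
lemma cp0K: "cp0 t \<in> K"
proof -
  have "(cp0 t)^q = t^q + (t^q + t)*(\<epsilon>+1)" by (simp add: cp0_def fr power_mult_distrib pow_qq eps_q)
  also have "\<dots> = cp0 t + 2 * t^q" unfolding cp0_def by algebra
  finally show ?thesis by (simp add: K_iff)
qed
lemma c_decomp: "t = cp0 t + cp1 t * \<epsilon>"
proof -
  have "cp0 t + cp1 t * \<epsilon> = t + 2 * ((t + t^q) * \<epsilon>)" unfolding cp0_def cp1_def by algebra
  thus ?thesis by simp
qed
lemma cp1_comp: assumes "u0 \<in> K" "u1 \<in> K" shows "cp1 (u0 + u1 * \<epsilon>) = u1"
proof -
  have "cp1 (u0 + u1 * \<epsilon>) = u0 + u1 * \<epsilon> + (u0 + u1 * (\<epsilon> + 1))"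
    using assms by (simp add: cp1_def K_iff fr power_mult_distrib eps_q)
  also have "\<dots> = u1 + 2 * (u0 + u1 * \<epsilon>)" by algebra
  finally show ?thesis by simp
qed
lemma cp0_comp: assumes "u0 \<in> K" "u1 \<in> K" shows "cp0 (u0 + u1 * \<epsilon>) = u0"
  using c_decomp[of "u0 + u1 * \<epsilon>"] cp1_comp[OF assms]
  by (metis add_right_imp_eq)
lemma cp1_add: "cp1 (s + t) = cp1 s + cp1 t"
proof -
  have "cp1 (s + t) = s + t + (s^q + t^q)" by (simp add: cp1_def fr)
  thus ?thesis unfolding cp1_def by (simp add: algebra_simps)
qed
lemma cp0_add: "cp0 (s + t) = cp0 s + cp0 t"
proof -
  have "cp0 (s + t) = s + t + (s + t + (s^q + t^q)) * \<epsilon>" by (simp add: cp0_def fr)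
  thus ?thesis unfolding cp0_def by (simp add: algebra_simps)
qed

end


definition vec4f :: "'a \<Rightarrow> 'a \<Rightarrow> 'a \<Rightarrow> 'a \<Rightarrow> nat \<Rightarrow> 'a" where
  "vec4f x0 x1 y0 y1 = (\<lambda>i. if i = 0 then x0 else if i = 1 then x1 else if i = 2 then y0 else y1)"

definition Qf :: "'a::comm_ring_1 \<Rightarrow> 'a \<Rightarrow> 'a \<Rightarrow> 'a \<Rightarrow> 'a \<Rightarrow> 'a \<Rightarrow> 'a \<Rightarrow> 'a \<Rightarrow> 'a \<Rightarrow> 'a" where
  "Qf e a0 a1 b0 b1 c0 c1 x y = (a0 + a1*e)*x^2 + (b0 + b1*e)*y^2 + (c0 + c1*e)*x*y"

lemma Xi_poly: "qeval (Xi_inf n a0 a1 b0 b1 c0 c1) (vec4f x0 x1 y0 y1) =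
  (a1+1)*x0*x0+1*x0*x1+c1*x0*y0+(c0+c1)*x0*y1+(a0+(1+n)*a1+n)*x1*x1+(c0+c1)*x1*y0+(c0+(1+n)*c1)*x1*y1+(b1+1)*y0*y0+1*y0*y1+(b0+(1+n)*b1+n)*y1*y1"
  by (simp add: qeval_expand Xi_inf_def vec4f_def)

context gfset begin

lemma sqq: "((u::'b)^2)^q = (u^q)^2" by (simp add: power_mult[symmetric] mult.commute)

lemma Xi_K:
  assumes K: "a0 \<in> K" "a1 \<in> K" "b0 \<in> K" "b1 \<in> K" "c0 \<in> K" "c1 \<in> K"
     "x0 \<in> K" "x1 \<in> K" "y0 \<in> K" "y1 \<in> K"
  defines "X \<equiv> x0 + x1 * \<epsilon>" and "Y \<equiv> y0 + y1 * \<epsilon>"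
  shows "qeval (Xi_inf \<nu> a0 a1 b0 b1 c0 c1) (vec4f x0 x1 y0 y1) =
     Qf \<epsilon> a0 a1 b0 b1 c0 c1 X Y + (Qf \<epsilon> a0 a1 b0 b1 c0 c1 X Y)^q + X^q * X + Y^q * Y"
proof -
  have Kq: "a0^q = a0" "a1^q = a1" "b0^q = b0" "b1^q = b1" "c0^q = c0" "c1^q = c1"
     "x0^q = x0" "x1^q = x1" "y0^q = y0" "y1^q = y1" using K by (simp_all add: K_iff)
  have Xq: "X^q = x0 + x1 * (\<epsilon> + 1)" unfolding X_def by (simp add: fr power_mult_distrib Kq eps_q)
  have Yq: "Y^q = y0 + y1 * (\<epsilon> + 1)" unfolding Y_def by (simp add: fr power_mult_distrib Kq eps_q)
  have Qq: "(Qf \<epsilon> a0 a1 b0 b1 c0 c1 X Y)^q = (a0 + a1*(\<epsilon>+1))*(X^q)^2 + (b0 + b1*(\<epsilon>+1))*(Y^q)^2 + (c0 + c1*(\<epsilon>+1))*X^q*Y^q"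
    unfolding Qf_def by (simp add: fr power_mult_distrib Kq eps_q sqq)
  have id: "((a0 + a1*\<epsilon>)*(x0 + x1*\<epsilon>)^2 + (b0 + b1*\<epsilon>)*(y0 + y1*\<epsilon>)^2 + (c0 + c1*\<epsilon>)*(x0 + x1*\<epsilon>)*(y0 + y1*\<epsilon>))
     + ((a0 + a1*(\<epsilon>+1))*(x0 + x1 * (\<epsilon> + 1))^2 + (b0 + b1*(\<epsilon>+1))*(y0 + y1 * (\<epsilon> + 1))^2 + (c0 + c1*(\<epsilon>+1))*(x0 + x1 * (\<epsilon> + 1))*(y0 + y1 * (\<epsilon> + 1)))
     + (x0 + x1 * (\<epsilon> + 1))*(x0 + x1*\<epsilon>) + (y0 + y1 * (\<epsilon> + 1))*(y0 + y1*\<epsilon>)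
     - ((a1+1)*x0*x0+1*x0*x1+c1*x0*y0+(c0+c1)*x0*y1+(a0+(1+\<nu>)*a1+\<nu>)*x1*x1+(c0+c1)*x1*y0+(c0+(1+\<nu>)*c1)*x1*y1+(b1+1)*y0*y0+1*y0*y1+(b0+(1+\<nu>)*b1+\<nu>)*y1*y1)
     = (\<epsilon>^2 + \<epsilon> + \<nu>) * (y1^2 + x1^2 + c1*x1*y1 + (2)*c1*x1*y0 + (2)*c1*x0*y1 + (2)*c0*x1*y1 + b1*y1^2 + (4)*b1*y0*y1 + (2)*b0*y1^2 + a1*x1^2 + (4)*a1*x0*x1 + (2)*a0*x1^2 + (2)*\<epsilon>*c1*x1*y1 + (2)*\<epsilon>*b1*y1^2 + (2)*\<epsilon>*a1*x1^2) + 2 * (c0*x0*y0 + b1*y0*y1 + b0*y0*y1 + b0*y0^2 + a1*x0*x1 + a0*x0*x1 + a0*x0^2 + (-1)*\<nu>*y1^2 + (-1)*\<nu>*x1^2 + (-1)*\<nu>*c1*x1*y1 + (-1)*\<nu>*c1*x1*y0 + (-1)*\<nu>*c1*x0*y1 + (-1)*\<nu>*c0*x1*y1 + (-1)*\<nu>*b1*y1^2 + (-2)*\<nu>*b1*y0*y1 + (-1)*\<nu>*b0*y1^2 + (-1)*\<nu>*a1*x1^2 + (-2)*\<nu>*a1*x0*x1 + (-1)*\<nu>*a0*x1^2 + \<epsilon>*y0*y1 + \<epsilon>*x0*x1 + \<epsilon>*c1*x1*y1 + \<epsilon>*c1*x0*y0 + \<epsilon>*c0*x1*y0 + \<epsilon>*c0*x0*y1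 + \<epsilon>*b1*y1^2 + \<epsilon>*b1*y0^2 + (2)*\<epsilon>*b0*y0*y1 + \<epsilon>*a1*x1^2 + \<epsilon>*a1*x0^2 + (2)*\<epsilon>*a0*x0*x1 + (-1)*\<epsilon>*\<nu>*c1*x1*y1 + (-1)*\<epsilon>*\<nu>*b1*y1^2 + (-1)*\<epsilon>*\<nu>*a1*x1^2)"
    by algebra
  hence "Qf \<epsilon> a0 a1 b0 b1 c0 c1 X Y + (Qf \<epsilon> a0 a1 b0 b1 c0 c1 X Y)^q + X^q * X + Y^q * Y
     - qeval (Xi_inf \<nu> a0 a1 b0 b1 c0 c1) (vec4f x0 x1 y0 y1) = 0"
    unfolding Xi_poly Qq Xq Yq using eps_eq by (simp add: Qf_def X_def Y_def)
  thus ?thesis by simp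
qed

end


locale gfq2 = gfset q h \<nu> \<epsilon> for q h and \<nu> \<epsilon> :: "'b::{field,finite}" +
  fixes a0 a1 b0 b1 c0 c1 :: "'b::{field,finite}"
  assumes coK: "a0 \<in> subGF q" "a1 \<in> subGF q" "b0 \<in> subGF q" "b1 \<in> subGF q"
                "c0 \<in> subGF q" "c1 \<in> subGF q"
begin

abbreviation "Xi \<equiv> Xi_inf \<nu> a0 a1 b0 b1 c0 c1"
abbreviation "QQ \<equiv> Qf \<epsilon> a0 a1 b0 b1 c0 c1"

definition emb :: "'b \<Rightarrow> 'b \<Rightarrow> nat \<Rightarrow> 'b" where
  "emb x y = vec4f (cp0 x) (cp1 x) (cp0 y) (cp1 y)"

lemma Xi_emb: "qeval Xi (emb x y) = QQ x y + (QQ x y)^q + x^q*x + y^q*y"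
  using Xi_K[OF coK cp0K cp1K cp0K cp1K, of x x y y] c_decomp[of x] c_decomp[of y]
  unfolding emb_def by simp

lemma Xi_line:
  assumes "QQ x1 y1 = 0" "x1^q*x1 + y1^q*y1 = 0"
  shows "qeval Xi (emb (l*x1) (l*y1)) = 0"
proof -
  have "QQ (l*x1) (l*y1) = l^2 * QQ x1 y1" unfolding Qf_def by algebra
  moreover have "(l*x1)^q*(l*x1) + (l*y1)^q*(l*y1) = l^q*l*(x1^q*x1 + y1^q*y1)"
    by (simp add: power_mult_distrib algebra_simps)
  ultimately show ?thesis using assms Xi_emb zq by simp
qed

lemma decompK:
  assumes D: "x1*y2 - x2*y1 \<noteq> 0"
    and z1: "QQ x1 y1 = 0" "x1^q*x1 + y1^q*y1 = 0"
    and z2: "QQ x2 y2 = 0" "x2^q*x2 + y2^q*y2 = 0"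
    and v: "\<And>i. i < 4 \<Longrightarrow> v i \<in> K"
  shows "\<exists>u w. (\<forall>i<4. u i \<in> K \<and> w i \<in> K \<and> v i = u i + w i) \<and> qeval Xi u = 0 \<and> qeval Xi w = 0"
proof -
  define X where "X = v 0 + v 1 * \<epsilon>"
  define Y where "Y = v 2 + v 3 * \<epsilon>"
  define d where "d = x1*y2 - x2*y1"
  define l where "l = (X*y2 - x2*Y)/d"
  define m where "m = (x1*Y - X*y1)/d"
  have dn: "d \<noteq> 0" using D d_def by simp
  have nX: "(X*y2 - x2*Y)*x1 + (x1*Y - X*y1)*x2 = X*d" unfolding d_def by algebra
  have nY: "(X*y2 - x2*Y)*y1 + (x1*Y - X*y1)*y2 = Y*d" unfolding d_def by algebra
  have "l*x1 + m*x2 = ((X*y2 - x2*Y)*x1 + (x1*Y - X*y1)*x2)/d"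
    unfolding l_def m_def by (simp add: add_divide_distrib)
  hence eX: "l*x1 + m*x2 = X" using nX dn by simp
  have "l*y1 + m*y2 = ((X*y2 - x2*Y)*y1 + (x1*Y - X*y1)*y2)/d"
    unfolding l_def m_def by (simp add: add_divide_distrib)
  hence eY: "l*y1 + m*y2 = Y" using nY dn by simp
  define u where "u = emb (l*x1) (l*y1)"
  define w where "w = emb (m*x2) (m*y2)"
  have vK: "v 0 \<in> K" "v 1 \<in> K" "v 2 \<in> K" "v 3 \<in> K" using v by auto
  have "\<forall>i<4. u i \<in> K \<and> w i \<in> K \<and> v i = u i + w i"
  proof (intro allI impI)
    fix i :: nat assume i: "i < 4"
    have s0: "cp0 (l*x1) + cp0 (m*x2) = v 0" using cp0_add[symmetric] eX cp0_comp vK X_def by metis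
    have s1: "cp1 (l*x1) + cp1 (m*x2) = v 1" using cp1_add[symmetric] eX cp1_comp vK X_def by metis
    have s2: "cp0 (l*y1) + cp0 (m*y2) = v 2" using cp0_add[symmetric] eY cp0_comp vK Y_def by metis
    have s3: "cp1 (l*y1) + cp1 (m*y2) = v 3" using cp1_add[symmetric] eY cp1_comp vK Y_def by metis
    have "i = 0 \<or> i = 1 \<or> i = 2 \<or> i = 3" using i by auto
    thus "u i \<in> K \<and> w i \<in> K \<and> v i = u i + w i"
      unfolding u_def w_def emb_def vec4f_def using s0 s1 s2 s3
      by (auto simp: cp0K cp1K)
  qed
  moreover have "qeval Xi u = 0" unfolding u_def using Xi_line z1 by blast
  moreover have "qeval Xi w = 0" unfolding w_def using Xi_line z2 by blast
  ultimately show ?thesis by blast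
qed

end


lemma qeval_cong: "(\<And>i. i < 4 \<Longrightarrow> v i = w i) \<Longrightarrow> qeval C v = qeval C w"
  by (simp add: qeval_expand)

lemma qeval_restrict: "qeval C y = qeval C (\<lambda>i. if var_appears C i then y i else 0)"
proof -
  have key: "C i j * y i * y j = C i j * (if var_appears C i then y i else 0) * (if var_appears C j then y j else 0)"
    if ij: "i \<le> j" "j < 4" for i j
  proof (cases "var_appears C i \<and> var_appears C j")
    case True then show ?thesis by simp
  next
    case False
    then have "\<not> var_appears C i \<or> \<not> var_appears C j" by simp
    then have "C i j = 0"
    proof
      assume "\<not> var_appears C i"
      then have "C (min i j) (max i j) = 0" using ij unfolding var_appears_def by auto
      then show "C i j = 0" using ij by (simp add: min_def max_def)
    next
      assume "\<not> var_appears C j"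
      moreover have "i < 4" using ij by simp
      ultimately have "C (min j i) (max j i) = 0" unfolding var_appears_def by blast
      then show "C i j = 0" using ij by (cases "i = j") (simp_all add: min_def max_def)
    qed
    then show ?thesis by simp
  qed
  show ?thesis unfolding qeval_def by (intro sum.cong refl) (simp add: key)
qed

lemma qeval_two: assumes "a < b" "b < (4::nat)"
  shows "qeval C (\<lambda>i. if i = a then s else if i = b then t else 0) = C a a * s^2 + C a b * s * t + C b b * t^2"
proof -
  have "(a=0 \<and> b=1) \<or> (a=0 \<and> b=2) \<or> (a=0 \<and> b=3) \<or> (a=1 \<and> b=2) \<or> (a=1 \<and> b=3) \<or> (a=2 \<and> b=3)"
    using assms by auto
  thus ?thesis by (elim disjE conjE; simp add: qeval_expand power2_eq_square)
qed

lemma qeval_e: assumes "i < (4::nat)"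
  shows "qeval C (\<lambda>k. if k = i then 1 else 0) = C i i"
proof -
  have "i = 0 \<or> i = 1 \<or> i = 2 \<or> i = 3" using assms by auto
  thus ?thesis by (elim disjE; simp add: qeval_expand)
qed

lemma lin_e: "i < (4::nat) \<Longrightarrow> (\<Sum>j<4. N k j * (if j = i then 1 else 0)) = (N k i :: 'a::comm_ring_1)"
  by (simp add: if_distrib cong: if_cong)

lemma lin_eij: assumes "i < (4::nat)" "j < 4" "i \<noteq> j"
  shows "(\<Sum>x<4. N k x * (if x = i then 1 else if x = j then 1 else 0)) = (N k i + N k j :: 'a::comm_ring_1)"
proof -
  have "(\<Sum>x<4. N k x * (if x = i then 1 else if x = j then 1 else 0))
      = (\<Sum>x<4. N k x * (if x = i then 1 else 0) + N k x * (if x = j then 1 else 0))"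
    using assms by (intro sum.cong) auto
  also have "\<dots> = N k i + N k j" using assms by (simp add: sum.distrib lin_e)
  finally show ?thesis .
qed

lemma inv_id: "0 \<in> K \<Longrightarrow> 1 \<in> K \<Longrightarrow> invertible_over K (\<lambda>(i::nat) (j::nat). if i = j then (1::'a::field) else 0)"
proof -
  assume K: "0 \<in> K" "1 \<in> K"
  have "\<forall>i<(4::nat). \<forall>j<(4::nat). (\<Sum>k<(4::nat). (if i = k then (1::'a) else 0) * (if k = j then 1 else 0)) = (if i = j then 1 else 0)"
    by (simp add: numeral_eq_Suc lessThan_Suc)
  then show ?thesis unfolding invertible_over_def using K
    by (intro conjI exI[of _ "\<lambda>(i::nat) (j::nat). if i = j then (1::'a) else 0"]) auto
qed


context gfq2 begin

lemma factor:
  assumes K: "\<alpha> \<in> K" "\<beta> \<in> K" "\<gamma> \<in> K" "s \<in> K" "t \<in> K" and nz: "s \<noteq> 0 \<or> t \<noteq> 0"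
    and z: "\<alpha>*s^2 + \<beta>*s*t + \<gamma>*t^2 = 0"
  shows "\<exists>p1 p2 p3 p4. p1 \<in> K \<and> p2 \<in> K \<and> p3 \<in> K \<and> p4 \<in> K \<and>
     (\<forall>S T. \<alpha>*S^2 + \<beta>*S*T + \<gamma>*T^2 = (p1*S + p2*T)*(p3*S + p4*T))"
proof (cases "\<alpha> = 0")
  case True
  show ?thesis
    by (rule exI[of _ 0], rule exI[of _ 1], rule exI[of _ \<beta>], rule exI[of _ \<gamma>])
       (use K True in \<open>simp add: algebra_simps power2_eq_square\<close>)
next
  case False
  have t: "t \<noteq> 0"
  proof
    assume "t = 0" then have "\<alpha>*s^2 = 0" using z by simp
    then show False using False nz \<open>t = 0\<close> by simp
  qed
  define r where "r = s / t"
  have rK: "r \<in> K" using K unfolding r_def by simp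
  have "(\<alpha>*s^2 + \<beta>*s*t + \<gamma>*t^2) / t^2 = \<alpha>*r^2 + \<beta>*r + \<gamma>"
    using t unfolding r_def by (simp add: field_simps power2_eq_square)
  hence rz: "\<alpha>*r^2 + \<beta>*r + \<gamma> = 0" using z by simp
  have fac: "\<forall>S T. \<alpha>*S^2 + \<beta>*S*T + \<gamma>*T^2 = (1*S + (-r)*T)*(\<alpha>*S + (\<alpha>*r + \<beta>)*T)"
  proof (intro allI)
    fix S T
    have "(1*S + (-r)*T)*(\<alpha>*S + (\<alpha>*r + \<beta>)*T) = \<alpha>*S^2 + \<beta>*S*T - (\<alpha>*r^2 + \<beta>*r + \<gamma>)*T^2 + \<gamma>*T^2"
      by algebra
    then show "\<alpha>*S^2 + \<beta>*S*T + \<gamma>*T^2 = (1*S + (-r)*T)*(\<alpha>*S + (\<alpha>*r + \<beta>)*T)"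
      using rz by simp
  qed
  have mr: "-r \<in> K" using rK by (simp add: neg)
  show ?thesis
    apply (rule exI[of _ 1], rule exI[of _ "-r"], rule exI[of _ \<alpha>], rule exI[of _ "\<alpha>*r+\<beta>"])
    using fac mr rK K by simp
qed

end


context gfq2 begin

lemma XiK: "Xi i j \<in> K"
  using coK nu_GF unfolding Xi_inf_def by simp

lemma main:
  assumes D: "x1*y2 - x2*y1 \<noteq> 0"
    and z1: "QQ x1 y1 = 0" "x1^q*x1 + y1^q*y1 = 0"
    and z2: "QQ x2 y2 = 0" "x2^q*x2 + y2^q*y2 = 0"
    and rank: "qrank K Xi = 2"
  shows "two_planes_over K Xi"
proof -
  let ?P = "\<lambda>n. \<exists>M. invertible_over K M \<and> card {k. k < 4 \<and> var_appears (qsubst Xi M) k} = n"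
  have ex: "\<exists>n. ?P n" using inv_id[of K] by auto
  have "?P (qrank K Xi)" unfolding qrank_def by (rule LeastI_ex[OF ex])
  then obtain M where invM: "invertible_over K M"
    and cardA: "card {k. k < 4 \<and> var_appears (qsubst Xi M) k} = 2" using rank by auto
  obtain N where NK: "\<And>i j. i < 4 \<Longrightarrow> j < 4 \<Longrightarrow> N i j \<in> K"
    and MN: "\<And>i j. i < 4 \<Longrightarrow> j < 4 \<Longrightarrow> (\<Sum>k<4. M i k * N k j) = (if i = j then 1 else 0)"
    using invM unfolding invertible_over_def by blast
  have MK: "\<And>i j. i < 4 \<Longrightarrow> j < 4 \<Longrightarrow> M i j \<in> K" using invM unfolding invertible_over_def by blast
  define C' where "C' = qsubst Xi M"
  obtain a0' b0' where ab0: "{k. k < 4 \<and> var_appears C' k} = {a0', b0'}" "a0' \<noteq> b0'"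
    using cardA unfolding C'_def by (auto simp: card_2_iff)
  define a where "a = min a0' b0'"
  define b where "b = max a0' b0'"
  have A: "{k. k < 4 \<and> var_appears C' k} = {a, b}" using ab0 unfolding a_def b_def
    by (auto simp: min_def max_def)
  have ab: "a < b" "b < 4" using ab0 A unfolding a_def b_def by (auto simp: min_def max_def)
  have C'K: "C' i j \<in> K" if "i < 4" "j < 4" for i j
    unfolding C'_def qsubst_def using MK XiK that by (auto intro!: Ksum)
  define lin where "lin k v = (\<Sum>j<4. N k j * v j)" for k and v :: "nat \<Rightarrow> 'b"
  define g where "g s t = C' a a * s^2 + C' a b * s * t + C' b b * t^2" for s t
  have MNv: "(\<Sum>k<4. M i k * lin k v) = v i" if i: "i < 4" for i v
  proof -
    have "(\<Sum>k<4. M i k * lin k v) = (\<Sum>k<4. \<Sum>j<4. M i k * (N k j * v j))"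
      unfolding lin_def by (simp add: sum_distrib_left)
    also have "\<dots> = (\<Sum>j<4. \<Sum>k<4. M i k * (N k j * v j))" by (rule sum.swap)
    also have "\<dots> = (\<Sum>j<4. (\<Sum>k<4. M i k * N k j) * v j)"
      by (simp add: sum_distrib_right mult.assoc)
    also have "\<dots> = (\<Sum>j<4. (if i = j then 1 else 0) * v j)"
      using MN i by (intro sum.cong) auto
    also have "\<dots> = (\<Sum>j<4. if i = j then v j else 0)" by (intro sum.cong) auto
    also have "\<dots> = v i" using i by simp
    finally show ?thesis .
  qed
  have Xg: "qeval Xi v = g (lin a v) (lin b v)" for v
  proof -
    have "qeval Xi v = qeval Xi (\<lambda>i. \<Sum>k<4. M i k * lin k v)"
      using MNv by (intro qeval_cong) simp
    also have "\<dots> = qeval C' (\<lambda>k. lin k v)" unfolding C'_def by (rule qsubst_eval)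
    also have "\<dots> = qeval C' (\<lambda>i. if var_appears C' i then lin i v else 0)" by (rule qeval_restrict)
    also have "\<dots> = qeval C' (\<lambda>i. if i = a then lin a v else if i = b then lin b v else 0)"
    proof (rule qeval_cong)
      fix i :: nat assume "i < 4"
      then have "var_appears C' i \<longleftrightarrow> i = a \<or> i = b" using A by blast
      then show "(if var_appears C' i then lin i v else 0) = (if i = a then lin a v else if i = b then lin b v else 0)"
        by auto
    qed
    also have "\<dots> = g (lin a v) (lin b v)" unfolding g_def using ab by (rule qeval_two)
    finally show ?thesis .
  qed
  have linK: "lin k v \<in> K" if "k < 4" "\<And>i. i < 4 \<Longrightarrow> v i \<in> K" for k v
    unfolding lin_def using NK that by (auto intro!: Ksum)
  have linadd: "lin k v = lin k u + lin k w" if "\<And>i. i < 4 \<Longrightarrow> v i = u i + w i" for k u v w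
    unfolding lin_def using that by (simp add: sum.distrib[symmetric] distrib_left)
  have iso: "\<exists>s t. s \<in> K \<and> t \<in> K \<and> (s \<noteq> 0 \<or> t \<noteq> 0) \<and> g s t = 0"
  proof (rule ccontr)
    assume "\<not> ?thesis"
    then have an: "\<And>s t. s \<in> K \<Longrightarrow> t \<in> K \<Longrightarrow> g s t = 0 \<Longrightarrow> s = 0 \<and> t = 0" by blast
    have lz: "lin a v = 0 \<and> lin b v = 0" if vK: "\<And>i. i < 4 \<Longrightarrow> v i \<in> K" and "qeval Xi v = 0" for v
      using an[of "lin a v" "lin b v"] linK[of a v] linK[of b v] vK ab Xg[of v] that by auto
    have all0: "qeval Xi v = 0" if vK: "\<And>i. i < 4 \<Longrightarrow> v i \<in> K" for v
    proof -
      obtain u w where uw: "\<forall>i<4. u i \<in> K \<and> w i \<in> K \<and> v i = u i + w i"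
        and u0: "qeval Xi u = 0" and w0: "qeval Xi w = 0"
        using decompK[OF D z1 z2, of v] vK by blast
      have "lin a u = 0 \<and> lin b u = 0" using lz[of u] uw u0 by blast
      moreover have "lin a w = 0 \<and> lin b w = 0" using lz[of w] uw w0 by blast
      moreover have "lin a v = lin a u + lin a w" "lin b v = lin b u + lin b w"
        using linadd uw by blast+
      ultimately show ?thesis using Xg[of v] unfolding g_def by simp
    qed
    have e0: "qeval Xi (vec4f 1 0 0 0) = 0" by (rule all0) (simp add: vec4f_def)
    have e1: "qeval Xi (vec4f 0 1 0 0) = 0" by (rule all0) (simp add: vec4f_def)
    have e01: "qeval Xi (vec4f 1 1 0 0) = 0" by (rule all0) (simp add: vec4f_def)
    have "(1::'b) = qeval Xi (vec4f 1 1 0 0) - qeval Xi (vec4f 1 0 0 0) - qeval Xi (vec4f 0 1 0 0)"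
      unfolding Xi_poly by (simp add: algebra_simps)
    then show False using e0 e1 e01 by simp
  qed
  then obtain s t where st: "s \<in> K" "t \<in> K" "s \<noteq> 0 \<or> t \<noteq> 0" "g s t = 0" by blast
  obtain p1 p2 p3 p4 where pK: "p1 \<in> K" "p2 \<in> K" "p3 \<in> K" "p4 \<in> K"
    and fac: "\<And>S T. C' a a * S^2 + C' a b * S * T + C' b b * T^2 = (p1*S + p2*T)*(p3*S + p4*T)"
    using factor[of "C' a a" "C' a b" "C' b b" s t] C'K ab st unfolding g_def by auto
  define l where "l i = p1 * N a i + p2 * N b i" for i
  define m where "m i = p3 * N a i + p4 * N b i" for i
  have gf: "g S T = (p1*S + p2*T)*(p3*S + p4*T)" for S T unfolding g_def by (rule fac)
  have diag: "Xi i i = l i * m i" if i: "i < 4" for i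
  proof -
    have "Xi i i = qeval Xi (\<lambda>k. if k = i then 1 else 0)" by (rule qeval_e[OF i, symmetric])
    also have "\<dots> = l i * m i" unfolding Xg gf lin_def using i by (simp add: lin_e l_def m_def)
    finally show ?thesis .
  qed
  have offd: "Xi i j = l i * m j + l j * m i" if ij: "i < j" "j < 4" for i j
  proof -
    have "qeval Xi (\<lambda>k. if k = i then 1 else if k = j then 1 else 0) = Xi i i * 1^2 + Xi i j * 1 * 1 + Xi j j * 1^2"
      using ij by (rule qeval_two)
    moreover have "qeval Xi (\<lambda>k. if k = i then 1 else if k = j then 1 else 0) = (l i + l j) * (m i + m j)"
      unfolding Xg gf lin_def using ij by (simp add: lin_eij l_def m_def algebra_simps)
    ultimately have "Xi i j = (l i + l j) * (m i + m j) - Xi i i - Xi j j" by simp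
    also have "\<dots> = l i * m j + l j * m i" using diag ij by (simp add: algebra_simps)
    finally show ?thesis .
  qed
  show ?thesis unfolding two_planes_over_def
  proof (intro exI conjI allI impI)
    fix i :: nat assume "i < 4"
    then show "l i \<in> K" "m i \<in> K" using pK NK ab unfolding l_def m_def by auto
  next
    fix i j :: nat assume "i < 4" "j < 4" "i \<le> j"
    then show "Xi i j = (if i = j then l i * m i else l i * m j + l j * m i)"
      using diag offd by auto
  qed
qed

end


lemma vlin: "vadd (vsmult r (u1,u2,u3,u4)) (vsmult s (w1,w2,w3,w4)) =
   (r*u1 + s*w1, r*u2 + s*w2, r*u3 + s*w3, r*u4 + s*w4)"
  by (simp add: vadd_def vsmult_def)

lemma span_sub:
  fixes u w p q :: "'a::field vec4"
  assumes iu: "vindep u w" and ip: "vindep p q" and sub: "vspan2 u w \<subseteq> vspan2 p q"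
  shows "vspan2 u w = vspan2 p q"
proof -
  obtain u1 u2 u3 u4 where u: "u = (u1,u2,u3,u4)" by (cases u) auto
  obtain w1 w2 w3 w4 where w: "w = (w1,w2,w3,w4)" by (cases w) auto
  obtain p1 p2 p3 p4 where p: "p = (p1,p2,p3,p4)" by (cases p) auto
  obtain q1 q2 q3 q4 where q: "q = (q1,q2,q3,q4)" by (cases q) auto
  have iu': "r = 0 \<and> s = 0" if "r*u1 + s*w1 = 0" "r*u2 + s*w2 = 0" "r*u3 + s*w3 = 0" "r*u4 + s*w4 = 0" for r s
  proof -
    have "vadd (vsmult r u) (vsmult s w) = (0,0,0,0)" using that by (simp add: u w vlin)
    then show ?thesis using iu unfolding vindep_def by blast
  qed
  have "u = vadd (vsmult 1 u) (vsmult 0 w)" by (simp add: u w vlin)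
  then have "u \<in> vspan2 u w" unfolding vspan2_def by blast
  then have "u \<in> vspan2 p q" using sub by blast
  then obtain a b where "u = vadd (vsmult a p) (vsmult b q)" unfolding vspan2_def by blast
  then have ab: "u1 = a*p1 + b*q1" "u2 = a*p2 + b*q2" "u3 = a*p3 + b*q3" "u4 = a*p4 + b*q4"
    using u p q by (simp_all add: vlin)
  have "w = vadd (vsmult 0 u) (vsmult 1 w)" by (simp add: u w vlin)
  then have "w \<in> vspan2 u w" unfolding vspan2_def by blast
  then have "w \<in> vspan2 p q" using sub by blast
  then obtain c d where "w = vadd (vsmult c p) (vsmult d q)" unfolding vspan2_def by blast
  then have cd: "w1 = c*p1 + d*q1" "w2 = c*p2 + d*q2" "w3 = c*p3 + d*q3" "w4 = c*p4 + d*q4"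
    using w p q by (simp_all add: vlin)
  have D: "a*d - b*c \<noteq> 0"
  proof
    assume D0: "a*d - b*c = 0"
    have e1: "d*(a*P+b*Q) + (-b)*(c*P+d*Q) = 0" for P Q
    proof -
      have "d*(a*P+b*Q) + (-b)*(c*P+d*Q) = (a*d - b*c)*P" by algebra
      then show ?thesis using D0 by simp
    qed
    have e2: "c*(a*P+b*Q) + (-a)*(c*P+d*Q) = 0" for P Q
    proof -
      have "c*(a*P+b*Q) + (-a)*(c*P+d*Q) = -(a*d - b*c)*Q" by algebra
      then show ?thesis using D0 by simp
    qed
    have "d = 0 \<and> -b = 0" by (rule iu') (simp_all only: ab cd e1)
    moreover have "c = 0 \<and> -a = 0" by (rule iu') (simp_all only: ab cd e2)
    ultimately have "u1 = 0 \<and> u2 = 0 \<and> u3 = 0 \<and> u4 = 0" using ab by simp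
    then show False using iu'[of 1 0] by simp
  qed
  have "vspan2 p q \<subseteq> vspan2 u w"
  proof
    fix x assume "x \<in> vspan2 p q"
    then obtain r s where "x = vadd (vsmult r p) (vsmult s q)" unfolding vspan2_def by blast
    then have x: "x = (r*p1 + s*q1, r*p2 + s*q2, r*p3 + s*q3, r*p4 + s*q4)"
      using p q by (simp add: vlin)
    let ?r = "(r*d - s*c)/(a*d - b*c)" and ?s = "(s*a - r*b)/(a*d - b*c)"
    have comp: "?r*(a*P + b*Q) + ?s*(c*P + d*Q) = r*P + s*Q" for P Q
    proof -
      have "?r*(a*P + b*Q) + ?s*(c*P + d*Q) = ((r*d - s*c)*(a*P + b*Q) + (s*a - r*b)*(c*P + d*Q))/(a*d - b*c)"
        by (simp add: add_divide_distrib)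
      also have "(r*d - s*c)*(a*P + b*Q) + (s*a - r*b)*(c*P + d*Q) = (r*P + s*Q)*(a*d - b*c)" by algebra
      finally show ?thesis using D by simp
    qed
    have "x = vadd (vsmult ?r u) (vsmult ?s w)"
      unfolding x u w vlin ab cd by (simp only: comp)
    then show "x \<in> vspan2 u w" unfolding vspan2_def by blast
  qed
  with sub show ?thesis by blast
qed


lemma two_pts:
  fixes F :: "'a::field \<Rightarrow> 'a \<Rightarrow> bool"
  assumes U: "union_two_lines {(x,y,z,t). (x,y,z,t) \<noteq> (0,0,0,0) \<and> t = 0 \<and> F x y}"
  shows "\<exists>x1 y1 x2 y2. F x1 y1 \<and> F x2 y2 \<and> x1*y2 - x2*y1 \<noteq> 0"
proof (rule ccontr)
  assume nc: "\<not> ?thesis"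
  have pr: "x1*y2 = x2*y1" if "F x1 y1" "F x2 y2" for x1 y1 x2 y2
  proof -
    have "\<not> (x1*y2 - x2*y1 \<noteq> 0)" using nc that by blast
    then show ?thesis by simp
  qed
  define S :: "'a vec4 set" where "S = {(x,y,z,t). (x,y,z,t) \<noteq> (0,0,0,0) \<and> t = 0 \<and> F x y}"
  obtain u1 w1 u2 w2 where i1: "vindep u1 w1" and i2: "vindep u2 w2"
    and ne: "vspan2 u1 w1 \<noteq> vspan2 u2 w2" and SU: "S = (vspan2 u1 w1 \<union> vspan2 u2 w2) - {(0,0,0,0)}"
    using U unfolding union_two_lines_def S_def by blast
  obtain x0 y0 :: 'a where nz: "x0 \<noteq> 0 \<or> y0 \<noteq> 0" and p0: "\<And>x y. F x y \<Longrightarrow> x*y0 = x0*y"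
  proof (cases "\<exists>x y. F x y \<and> (x \<noteq> 0 \<or> y \<noteq> 0)")
    case True
    then obtain x0 y0 where "F x0 y0" "x0 \<noteq> 0 \<or> y0 \<noteq> 0" by blast
    then show ?thesis using that pr by blast
  next
    case False
    then show ?thesis using that[of 1 0] by auto
  qed
  define P where "P = vspan2 (x0,y0,0,0) ((0::'a),(0::'a),(1::'a),(0::'a))"
  have iP: "vindep (x0,y0,0,0) ((0::'a),(0::'a),(1::'a),(0::'a))"
    unfolding vindep_def
  proof (intro allI impI)
    fix r s :: 'a
    assume "vadd (vsmult r (x0, y0, 0, 0)) (vsmult s (0, 0, 1, 0)) = (0, 0, 0, 0)"
    then have "r*x0 = 0" "r*y0 = 0" "s = 0" by (simp_all add: vlin)
    then show "r = 0 \<and> s = 0" using nz by auto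
  qed
  have SP: "v \<in> P" if "v \<in> S" for v
  proof -
    obtain x y z t where v: "v = (x,y,z,t)" by (cases v) auto
    have t: "t = 0" and F: "F x y" using that unfolding S_def v by auto
    have e: "x*y0 = x0*y" using p0[OF F] .
    obtain r where r: "r*x0 = x" "r*y0 = y"
    proof (cases "x0 = 0")
      case True
      then have "y0 \<noteq> 0" using nz by simp
      then have "x = 0" using e True by simp
      then show ?thesis using that[of "y/y0"] True \<open>y0 \<noteq> 0\<close> by simp
    next
      case False
      have "x / x0 * y0 = y" using e False by (simp add: field_simps)
      then show ?thesis using that[of "x/x0"] False by simp
    qed
    have "v = vadd (vsmult r (x0,y0,0,0)) (vsmult z (0,0,1,0))" unfolding v vlin using r t by simp
    then show ?thesis unfolding P_def vspan2_def by blast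
  qed
  have zP: "(0,0,0,0) \<in> P"
  proof -
    have "(0,0,0,0) = vadd (vsmult 0 (x0,y0,0,0)) (vsmult (0::'a) (0,0,1,0))" by (simp add: vlin)
    then show ?thesis unfolding P_def vspan2_def by blast
  qed
  have sub: "A \<subseteq> P" if "A - {(0,0,0,0)} \<subseteq> S" for A
  proof
    fix v assume "v \<in> A"
    show "v \<in> P"
    proof (cases "v = (0,0,0,0)")
      case True then show ?thesis using zP by simp
    next
      case False
      then have "v \<in> S" using \<open>v \<in> A\<close> that by blast
      then show ?thesis by (rule SP)
    qed
  qed
  have "vspan2 u1 w1 \<subseteq> P" using SU by (intro sub) blast
  then have "vspan2 u1 w1 = P" unfolding P_def using span_sub[OF i1 iP] by simp
  moreover have "vspan2 u2 w2 \<subseteq> P" using SU by (intro sub) blast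
  then have "vspan2 u2 w2 = P" unfolding P_def using span_sub[OF i2 iP] by simp
  ultimately show False using ne by simp
qed


theorem lemma5:
  fixes q h :: nat
    and \<nu> \<epsilon> a0 a1 b0 b1 c0 c1 d e f :: "'b::{field,finite}"
  assumes q_def: "q = 2 ^ h" and h_pos: "h \<ge> 1"
    and card: "card (UNIV :: 'b set) = q ^ 2"
    and nu_GF: "\<nu> \<in> subGF q" and nu_ne1: "\<nu> \<noteq> 1"
    and trace: "(\<Sum>i<h. \<nu> ^ (2 ^ i)) = 1"
    and eps_notin: "\<epsilon> \<notin> subGF q" and eps_eq: "\<epsilon>\<^sup>2 + \<epsilon> + \<nu> = 0"
    and coords: "a0 \<in> subGF q" "a1 \<in> subGF q" "b0 \<in> subGF q" "b1 \<in> subGF q"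
                "c0 \<in> subGF q" "c1 \<in> subGF q"
    and hyp: "hyperbolic_quadric
       (\<lambda>(x,y,z,t). (a0 + a1*\<epsilon>)*x^2 + (b0 + b1*\<epsilon>)*y^2 + (c0 + c1*\<epsilon>)*x*y
                    + d*x*t + e*y*t + f*t^2 - z*t)"
    and Cinf: "union_two_lines
       {(x,y,z,t). (x,y,z,t) \<noteq> (0,0,0,0) \<and> t = 0
          \<and> (a0 + a1*\<epsilon>)*x^2 + (b0 + b1*\<epsilon>)*y^2 + (c0 + c1*\<epsilon>)*x*y
               + d*x*t + e*y*t + f*t^2 - z*t = 0
          \<and> z^q*t + z*t^q - x^(q+1) - y^(q+1) = 0}"
    and rank2: "qrank (subGF q) (Xi_inf \<nu> a0 a1 b0 b1 c0 c1) = 2"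
  shows "two_planes_over (subGF q) (Xi_inf \<nu> a0 a1 b0 b1 c0 c1)"
proof -
  interpret G: gfq2 q h \<nu> \<epsilon> a0 a1 b0 b1 c0 c1
    by unfold_locales (use q_def h_pos card nu_GF eps_notin eps_eq coords in auto)
  define F where "F x y \<longleftrightarrow> Qf \<epsilon> a0 a1 b0 b1 c0 c1 x y = 0 \<and> x^q*x + y^q*y = 0" for x y
  have qp: "q > 0" using q_def by simp
  have key: "((a0 + a1*\<epsilon>)*x^2 + (b0 + b1*\<epsilon>)*y^2 + (c0 + c1*\<epsilon>)*x*y
               + d*x*0 + e*y*0 + f*0^2 - z*0 = 0
          \<and> z^q*0 + z*0^q - x^(q+1) - y^(q+1) = 0) \<longleftrightarrow> F x y" for x y z :: 'b
  proof -
    have "z^q*0 + z*0^q - x^(q+1) - y^(q+1) = - (x^q*x + y^q*y)" using qp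
      by (simp add: power_0_left)
    then have e2: "(z^q*0 + z*0^q - x^(q+1) - y^(q+1) = 0) \<longleftrightarrow> (x^q*x + y^q*y = 0)"
      by (simp only: neg_equal_0_iff_equal)
    have e1: "((a0 + a1*\<epsilon>)*x^2 + (b0 + b1*\<epsilon>)*y^2 + (c0 + c1*\<epsilon>)*x*y
               + d*x*0 + e*y*0 + f*0^2 - z*0 = 0) \<longleftrightarrow> Qf \<epsilon> a0 a1 b0 b1 c0 c1 x y = 0"
      by (simp add: Qf_def)
    show ?thesis unfolding F_def by (simp only: e1 e2)
  qed
  have pw: "((x,y,z,t) \<noteq> (0,0,0,0) \<and> t = 0
          \<and> (a0 + a1*\<epsilon>)*x^2 + (b0 + b1*\<epsilon>)*y^2 + (c0 + c1*\<epsilon>)*x*y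
               + d*x*t + e*y*t + f*t^2 - z*t = 0
          \<and> z^q*t + z*t^q - x^(q+1) - y^(q+1) = 0)
     \<longleftrightarrow> ((x,y,z,t) \<noteq> (0,0,0,0) \<and> t = 0 \<and> F x y)" for x y z t :: 'b
  proof (cases "t = 0")
    case True then show ?thesis by (simp only: True key)
  next
    case False then show ?thesis by simp
  qed
  have "{(x,y,z,t). (x,y,z,t) \<noteq> (0,0,0,0) \<and> t = 0
          \<and> (a0 + a1*\<epsilon>)*x^2 + (b0 + b1*\<epsilon>)*y^2 + (c0 + c1*\<epsilon>)*x*y
               + d*x*t + e*y*t + f*t^2 - z*t = 0
          \<and> z^q*t + z*t^q - x^(q+1) - y^(q+1) = 0}
     = {(x,y,z,t). (x,y,z,t) \<noteq> (0,0,0,0) \<and> t = 0 \<and> F x y}"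
  proof (rule set_eqI)
    fix v :: "'b vec4"
    obtain x y z t where v: "v = (x,y,z,t)" by (cases v) auto
    show "v \<in> {(x,y,z,t). (x,y,z,t) \<noteq> (0,0,0,0) \<and> t = 0
          \<and> (a0 + a1*\<epsilon>)*x^2 + (b0 + b1*\<epsilon>)*y^2 + (c0 + c1*\<epsilon>)*x*y
               + d*x*t + e*y*t + f*t^2 - z*t = 0
          \<and> z^q*t + z*t^q - x^(q+1) - y^(q+1) = 0}
     \<longleftrightarrow> v \<in> {(x,y,z,t). (x,y,z,t) \<noteq> (0,0,0,0) \<and> t = 0 \<and> F x y}"
      unfolding v mem_Collect_eq prod.case by (rule pw)
  qed
  with Cinf have "union_two_lines {(x,y,z,t). (x,y,z,(t::'b)) \<noteq> (0,0,0,0) \<and> t = 0 \<and> F x y}"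
    by simp
  from two_pts[OF this] obtain x1 y1 x2 y2 where
    p: "F x1 y1" "F x2 y2" "x1*y2 - x2*y1 \<noteq> 0" by blast
  show ?thesis
    using G.main[OF p(3) _ _ _ _ rank2] p unfolding F_def by blast
qed

end
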